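(* Let $a_1\in\mathbb{R}$, $0<\varepsilon<1$, $T=1+\varepsilon$, and $(y,x_0)\in M^2=\mathbb{R}\times L^2(-1,0)$. Put $\widetilde{x}(t)=y+a_1\int_0^t x_0(\tau-1)\,d\tau$ for $t\in[0,1]$. Then $\mathcal{U}_T(y,x_0)$ is exactly the set of functions $u\in L^2(0,T)$ of the form (almost everywhere) $$u(t)=\begin{cases} u_0(t), & t\in[0,\varepsilon),\\ -a_1x_0(t-1), & t\in[\varepsilon,1),\\ -a_1\Big(\widetilde{x}(t-1)+\int_0^{t-1}u_0(\tau)\,d\tau\Big), & t\in[1,1+\varepsilon),\end{cases}$$ where $u_0$ ranges over all functions in $L^2(0,\varepsilon)$ satisfying $\int_0^\varepsilon u_0(\tau)\,d\tau=-\widetilde{x}(\varepsilon)$.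
   Context: Consider the scalar retarded control equation $\dot x(t)=a_1x(t-1)+u(t)$, $t\ge0$, with control $u\in L^2_{loc}(0,\infty)$ and initial data $x(0)=y$, $x(t)=x_0(t)$ for $t\in[-1,0)$, where $(y,x_0)\in M^2=\mathbb{R}\times L^2(-1,0)$. For every such initial state and control there is a unique continuous solution $x(t)=x(t;y,x_0,u)$ on $[0,\infty)$ (absolutely continuous, satisfying the equation a.e.). For $T>1$, the set of admissible controls $\mathcal{U}_T(y,x_0)$ is the set of $u\in L^2(0,T)$ such that $x(t;y,x_0,u)=0$ for all $t\in[T-1,T]$. *)

theory Defs
  imports "HOL-Analysis.Analysis"
begin

definition L2_on :: "real set \<Rightarrow> (real \<Rightarrow> real) \<Rightarrow> bool" where
  "L2_on A f \<longleftrightarrow> set_borel_measurable lborel A f \<and>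
                  set_integrable lborel A (\<lambda>t. (f t)\<^sup>2)"

definition hist_ext :: "(real \<Rightarrow> real) \<Rightarrow> (real \<Rightarrow> real) \<Rightarrow> real \<Rightarrow> real" where
  "hist_ext x0 x s = (if s < 0 then x0 s else x s)"

text \<open>x is a solution on [0,T] of  x'(t) = a1 x(t-1) + u(t),  x(0)=y, x = x0 on [-1,0):
  continuous on [0,T] and satisfies the equivalent integral equation
  (absolutely continuous + equation a.e.).\<close>
definition is_solution ::
  "real \<Rightarrow> real \<Rightarrow> real \<Rightarrow> (real \<Rightarrow> real) \<Rightarrow> (real \<Rightarrow> real) \<Rightarrow> (real \<Rightarrow> real) \<Rightarrow> bool" where
  "is_solution a1 T y x0 u x \<longleftrightarrow>
     continuous_on {0..T} x \<and>
     (\<forall>t\<in>{0..T}.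
        set_integrable lborel {0..t} (\<lambda>s. a1 * hist_ext x0 x (s - 1) + u s) \<and>
        x t = y + (LINT s:{0..t}|lborel. a1 * hist_ext x0 x (s - 1) + u s))"

definition admissible ::
  "real \<Rightarrow> real \<Rightarrow> real \<Rightarrow> (real \<Rightarrow> real) \<Rightarrow> (real \<Rightarrow> real) \<Rightarrow> bool" where
  "admissible a1 T y x0 u \<longleftrightarrow>
     L2_on {0..T} u \<and>
     (\<exists>x. is_solution a1 T y x0 u x \<and> (\<forall>t\<in>{T-1..T}. x t = 0))"

end

theory Submission
  imports Defs
begin
lemma lemZ:
  fixes f :: "real \<Rightarrow> real"
  assumes ab: "a \<le> b" and int: "set_integrable lborel {a<..b} f"
    and zero: "\<forall>t\<in>{a..b}. (LINT s:{a<..t}|lborel. f s) = 0"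
  shows "AE s in lborel. s \<in> {a<..b} \<longrightarrow> f s = 0"
proof -
  define g where "g = (\<lambda>s. indicator {a<..b} s * f s)"
  have gi: "integrable lborel g" using int unfolding set_integrable_def g_def by simp
  then have [measurable]: "g \<in> borel_measurable borel" by (simp add: borel_measurable_integrable)
  have key: "(\<integral>s. indicator {x<..} s * g s \<partial>lborel) = 0" for x
  proof -
    have eq: "(\<lambda>s. indicator {x<..} s * g s) = (\<lambda>s. indicator ({x<..} \<inter> {a<..b}) s *\<^sub>R f s)"
      by (auto simp: g_def indicator_def fun_eq_iff)
    have "(LINT s:{x<..} \<inter> {a<..b}|lborel. f s) = 0"
    proof (cases "x \<le> a")
      case True
      then have "{x<..} \<inter> {a<..b} = {a<..b}" by auto
      then show ?thesis using zero ab by auto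
    next
      case False
      show ?thesis
      proof (cases "b \<le> x")
        case True
        then have "{x<..} \<inter> {a<..b} = {}" by auto
        then show ?thesis by (simp add: set_lebesgue_integral_def)
      next
        case False2: False
        have s: "{x<..} \<inter> {a<..b} = {x<..b}" using False False2 by auto
        have u: "{a<..b} = {a<..x} \<union> {x<..b}" using False False2 by auto
        have i1: "set_integrable lborel {a<..x} f"
          by (rule set_integrable_subset[OF int]) (use False2 in auto)
        have i2: "set_integrable lborel {x<..b} f"
          by (rule set_integrable_subset[OF int]) (use False in auto)
        have "(LINT s:{a<..b}|lborel. f s) = (LINT s:{a<..x}|lborel. f s) + (LINT s:{x<..b}|lborel. f s)"
          by (subst u, rule set_integral_Un[OF _ i1 i2]) auto
        moreover have "(LINT s:{a<..b}|lborel. f s) = 0" using zero ab by auto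
        moreover have "(LINT s:{a<..x}|lborel. f s) = 0" using zero False False2 by auto
        ultimately show ?thesis using s by simp
      qed
    qed
    then show ?thesis unfolding eq set_lebesgue_integral_def by simp
  qed
  define gp where "gp = (\<lambda>s. max 0 (g s))"
  define gn where "gn = (\<lambda>s. max 0 (- g s))"
  have gpi: "integrable lborel gp" unfolding gp_def using gi by auto
  have gni: "integrable lborel gn" unfolding gn_def using gi by auto
  have [measurable]: "gp \<in> borel_measurable borel" "gn \<in> borel_measurable borel"
    unfolding gp_def gn_def by auto
  have gpn: "g s = gp s - gn s" for s unfolding gp_def gn_def by auto
  have em: "emeasure (density lborel (\<lambda>s. ennreal (h s))) A = ennreal (\<integral>s. indicator A s * h s \<partial>lborel)"
    if hi: "integrable lborel h" and hn: "\<And>s. 0 \<le> h s" and A: "A \<in> sets borel" for h A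
  proof -
    have [measurable]: "h \<in> borel_measurable borel" using hi by (simp add: borel_measurable_integrable)
    have "emeasure (density lborel (\<lambda>s. ennreal (h s))) A = (\<integral>\<^sup>+ s. ennreal (h s) * indicator A s \<partial>lborel)"
      using A by (subst emeasure_density) auto
    also have "\<dots> = (\<integral>\<^sup>+ s. ennreal (indicator A s * h s) \<partial>lborel)"
      by (intro nn_integral_cong) (auto simp: indicator_def)
    also have "\<dots> = ennreal (\<integral>s. indicator A s * h s \<partial>lborel)"
    proof (rule nn_integral_eq_integral)
      show "integrable lborel (\<lambda>s. indicator A s * h s)"
        using integrable_mult_indicator[OF _ hi, of A] A by simp
    qed (use hn in \<open>auto simp: indicator_def\<close>)
    finally show ?thesis .
  qed
  have gp0: "0 \<le> gp s" "0 \<le> gn s" for s unfolding gp_def gn_def by auto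
  have M: "density lborel (\<lambda>s. ennreal (gp s)) = density lborel (\<lambda>s. ennreal (gn s))"
  proof (rule measure_eqI_lessThan)
    fix x :: real
    show "emeasure (density lborel (\<lambda>s. ennreal (gp s))) {x<..} < \<infinity>"
      using em[OF gpi gp0(1)] by simp
    have i1: "integrable lborel (\<lambda>s. indicator {x<..} s * gp s)"
      using integrable_mult_indicator[OF _ gpi, of "{x<..}"] by simp
    have i2: "integrable lborel (\<lambda>s. indicator {x<..} s * gn s)"
      using integrable_mult_indicator[OF _ gni, of "{x<..}"] by simp
    have "(\<integral>s. indicator {x<..} s * g s \<partial>lborel) = (\<integral>s. indicator {x<..} s * gp s \<partial>lborel) - (\<integral>s. indicator {x<..} s * gn s \<partial>lborel)"
      unfolding gpn right_diff_distrib by (rule Bochner_Integration.integral_diff[OF i1 i2])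
    then show "emeasure (density lborel (\<lambda>s. ennreal (gp s))) {x<..} = emeasure (density lborel (\<lambda>s. ennreal (gn s))) {x<..}"
      using key[of x] em[OF gpi gp0(1)] em[OF gni gp0(2)] by simp
  qed auto
  have "AE s in lborel. g s = 0"
  proof (rule density_unique_real)
    show "integrable lborel g" by (rule gi)
    show "integrable lborel (\<lambda>s. 0::real)" by simp
    fix A :: "real set" assume A: "A \<in> sets lborel"
    have i1: "integrable lborel (\<lambda>s. indicator A s * gp s)"
      using integrable_mult_indicator[OF _ gpi, of "A"] A by simp
    have i2: "integrable lborel (\<lambda>s. indicator A s * gn s)"
      using integrable_mult_indicator[OF _ gni, of "A"] A by simp
    have "ennreal (\<integral>s. indicator A s * gp s \<partial>lborel) = ennreal (\<integral>s. indicator A s * gn s \<partial>lborel)"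
      using em[OF gpi gp0(1), of A] em[OF gni gp0(2), of A] M A by simp
    moreover have "0 \<le> (\<integral>s. indicator A s * gp s \<partial>lborel)" "0 \<le> (\<integral>s. indicator A s * gn s \<partial>lborel)"
      using gp0 by (auto intro!: integral_nonneg_AE simp: indicator_def)
    ultimately have e: "(\<integral>s. indicator A s * gp s \<partial>lborel) = (\<integral>s. indicator A s * gn s \<partial>lborel)"
      by simp
    have "(\<integral>s. indicator A s * g s \<partial>lborel) = (\<integral>s. indicator A s * gp s \<partial>lborel) - (\<integral>s. indicator A s * gn s \<partial>lborel)"
      unfolding gpn right_diff_distrib by (rule Bochner_Integration.integral_diff[OF i1 i2])
    then show "(LINT s:A|lborel. g s) = (LINT s:A|lborel. 0)"
      using e by (simp add: set_lebesgue_integral_def)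
  qed
  then show ?thesis by eventually_elim (auto simp: g_def)
qed

lemma abs_le_1_sq: "\<bar>x::real\<bar> \<le> 1 + x\<^sup>2"
proof -
  have "0 \<le> (\<bar>x\<bar> - 1)\<^sup>2" by simp
  moreover have "x\<^sup>2 = \<bar>x\<bar>\<^sup>2" by simp
  ultimately show ?thesis by (simp add: power2_eq_square algebra_simps)
qed

lemma L2_int:
  fixes f :: "real \<Rightarrow> real"
  assumes "L2_on A f" "A \<in> sets lborel" "emeasure lborel A < \<infinity>"
  shows "set_integrable lborel A f"
proof (rule set_integrable_bound[where f="\<lambda>s. 1 + (f s)\<^sup>2"])
  have "set_integrable lborel A (\<lambda>s. 1::real)"
    unfolding set_integrable_def using assms(2,3) by (simp add: integrable_real_indicator)
  then show "set_integrable lborel A (\<lambda>s. 1 + (f s)\<^sup>2)"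
    using assms(1) unfolding L2_on_def by (intro set_integral_add(1)) auto
  show "set_borel_measurable lborel A f" using assms(1) unfolding L2_on_def by simp
  show "AE x in lborel. x \<in> A \<longrightarrow> norm (f x) \<le> norm (1 + (f x)\<^sup>2)"
    using abs_le_1_sq by auto
qed

lemma sbm_subset:
  fixes f :: "real \<Rightarrow> real"
  assumes "set_borel_measurable lborel A f" "B \<in> sets lborel" "B \<subseteq> A"
  shows "set_borel_measurable lborel B f"
proof -
  have m: "(\<lambda>s. indicator A s * f s) \<in> borel_measurable lborel"
    using assms(1) unfolding set_borel_measurable_def by simp
  have "(\<lambda>s. indicator B s * (indicator A s * f s)) \<in> borel_measurable lborel"
    by (intro borel_measurable_times borel_measurable_indicator assms(2) m)
  moreover have "(\<lambda>s. indicator B s * (indicator A s * f s)) = (\<lambda>s. indicator B s *\<^sub>R f s)"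
    using assms(3) by (auto simp: indicator_def fun_eq_iff)
  ultimately show ?thesis unfolding set_borel_measurable_def by simp
qed

lemma L2_subset:
  fixes f :: "real \<Rightarrow> real"
  assumes "L2_on A f" "B \<in> sets lborel" "B \<subseteq> A"
  shows "L2_on B f"
  using assms sbm_subset set_integrable_subset unfolding L2_on_def by metis

lemma L2_shift:
  fixes x0 :: "real \<Rightarrow> real"
  assumes "L2_on {-1..<0} x0"
  shows "set_integrable lborel {0..<1} (\<lambda>s. x0 (s - 1))"
    "set_borel_measurable lborel {0..<1} (\<lambda>s. x0 (s - 1))"
proof -
  have i: "set_integrable lborel {-1..<0} x0" using L2_int[OF assms] by simp
  have eq: "(\<lambda>s. (\<lambda>x. indicator {-1..<0} x *\<^sub>R x0 x) (-1 + 1 * s)) = (\<lambda>s. indicator {0..<1} s *\<^sub>R x0 (s - 1))"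
    by (auto simp: indicator_def fun_eq_iff)
  have "integrable lborel (\<lambda>s. (\<lambda>x. indicator {-1..<0} x *\<^sub>R x0 x) (-1 + 1 * s))"
    using i unfolding set_integrable_def by (subst lborel_integrable_real_affine_iff) auto
  then show "set_integrable lborel {0..<1} (\<lambda>s. x0 (s - 1))"
    unfolding set_integrable_def eq .
  have m[measurable]: "(\<lambda>x. indicator {-1..<0} x *\<^sub>R x0 x) \<in> borel_measurable borel"
    using assms unfolding L2_on_def set_borel_measurable_def by simp
  have "(\<lambda>s. (\<lambda>x. indicator {-1..<0} x *\<^sub>R x0 x) (s - 1)) \<in> borel_measurable borel"
    by measurable
  moreover have "(\<lambda>s. (\<lambda>x. indicator {-1..<0} x *\<^sub>R x0 x) (s - 1)) = (\<lambda>s. indicator {0..<1} s *\<^sub>R x0 (s - 1))"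
    by (auto simp: indicator_def fun_eq_iff)
  ultimately show "set_borel_measurable lborel {0..<1} (\<lambda>s. x0 (s - 1))"
    unfolding set_borel_measurable_def by simp
qed

lemma cont_int:
  fixes f :: "real \<Rightarrow> real"
  assumes "set_integrable lborel {a..b} f"
  shows "continuous_on {a..b} (\<lambda>t. LINT s:{a..t}|lborel. f s)"
proof -
  have "f integrable_on {a..b}" using set_borel_integral_eq_integral(1)[OF assms] .
  then have "continuous_on {a..b} (\<lambda>t. integral {a..t} f)"
    by (rule indefinite_integral_continuous_1)
  moreover have "(LINT s:{a..t}|lborel. f s) = integral {a..t} f" if "t \<in> {a..b}" for t
    using that by (intro set_borel_integral_eq_integral(2) set_integrable_subset[OF assms]) auto
  ultimately show ?thesis using continuous_on_cong by (metis (no_types, lifting))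
qed

theorem mainTheorem1:
  fixes a1 \<epsilon> T y :: real and x0 u :: "real \<Rightarrow> real"
  assumes "0 < \<epsilon>" and "\<epsilon> < 1" and "T = 1 + \<epsilon>"
    and "L2_on {-1..<0} x0"
  defines "xt \<equiv> (\<lambda>t. y + a1 * (LINT \<tau>:{0..t}|lborel. x0 (\<tau> - 1)))"
  shows "admissible a1 T y x0 u \<longleftrightarrow>
    (L2_on {0..T} u \<and>
     (\<exists>u0. L2_on {0..\<epsilon>} u0 \<and>
        (LINT \<tau>:{0..\<epsilon>}|lborel. u0 \<tau>) = - xt \<epsilon> \<and>
        (AE t in lborel. t \<in> {0..<T} \<longrightarrow>
           u t = (if t < \<epsilon> then u0 t
                  else if t < 1 then - a1 * x0 (t - 1)
                  else - a1 * (xt (t - 1) + (LINT \<tau>:{0..t-1}|lborel. u0 \<tau>))))))"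
proof -
  note e0 = assms(1) and e1 = assms(2) and TT = assms(3)
  have x0i: "set_integrable lborel {0..r} (\<lambda>s. x0 (s - 1))" if "r < 1" for r
    by (rule set_integrable_subset[OF L2_shift(1)[OF assms(4)]]) (use that in auto)
  show ?thesis
  proof
    assume adm: "admissible a1 T y x0 u"
    then obtain x where uL2: "L2_on {0..T} u" and sol: "is_solution a1 T y x0 u x"
      and z: "\<forall>t\<in>{T-1..T}. x t = 0"
      unfolding admissible_def by blast
    have ui: "set_integrable lborel {0..T} u" using L2_int[OF uL2] by (simp add: emeasure_lborel_Icc_eq)
    have uir: "set_integrable lborel {0..r} u" if "r \<le> T" for r
      by (rule set_integrable_subset[OF ui]) (use that in auto)
    define h where "h = (\<lambda>s. a1 * hist_ext x0 x (s - 1) + u s)"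
    have hi: "set_integrable lborel {0..t} h" and hx: "x t = y + (LINT s:{0..t}|lborel. h s)"
      if "t \<in> {0..T}" for t
      using sol that unfolding is_solution_def h_def by auto
    have hr: "(LINT s:{0..r}|lborel. h s) = a1 * (LINT s:{0..r}|lborel. x0 (s - 1)) + (LINT s:{0..r}|lborel. u s)"
      if "r \<in> {0..\<epsilon>}" for r
    proof -
      have "(LINT s:{0..r}|lborel. h s) = (LINT s:{0..r}|lborel. a1 * x0 (s - 1) + u s)"
        using that e1 by (intro set_lebesgue_integral_cong) (auto simp: h_def hist_ext_def)
      also have "\<dots> = (LINT s:{0..r}|lborel. a1 * x0 (s - 1)) + (LINT s:{0..r}|lborel. u s)"
        using that e1 TT x0i[of r] uir[of r] by (intro set_integral_add(2)) auto
      finally show ?thesis by simp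
    qed
    have xr: "x r = xt r + (LINT s:{0..r}|lborel. u s)" if "r \<in> {0..\<epsilon>}" for r
      using hx[of r] hr[OF that] that TT unfolding xt_def by auto
    have xz: "x t = 0" if "t \<in> {\<epsilon>..T}" for t using z that TT by auto
    have Tm: "T - 1 = \<epsilon>" using TT by simp
    have hz: "AE s in lborel. s \<in> {\<epsilon><..T} \<longrightarrow> h s = 0"
    proof (rule lemZ)
      show "\<epsilon> \<le> T" using TT by simp
      show "set_integrable lborel {\<epsilon><..T} h"
        by (rule set_integrable_subset[OF hi[of T]]) (use e0 TT in auto)
      show "\<forall>t\<in>{\<epsilon>..T}. (LINT s:{\<epsilon><..t}|lborel. h s) = 0"
      proof
        fix t assume t: "t \<in> {\<epsilon>..T}"
        have u: "{0..t} = {0..\<epsilon>} \<union> {\<epsilon><..t}" using t e0 by auto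
        have i1: "set_integrable lborel {0..\<epsilon>} h"
          by (rule set_integrable_subset[OF hi[of t]]) (use t e0 in auto)
        have i2: "set_integrable lborel {\<epsilon><..t} h"
          by (rule set_integrable_subset[OF hi[of t]]) (use t e0 in auto)
        have "(LINT s:{0..t}|lborel. h s) = (LINT s:{0..\<epsilon>}|lborel. h s) + (LINT s:{\<epsilon><..t}|lborel. h s)"
          by (subst u, rule set_integral_Un[OF _ i1 i2]) auto
        moreover have "x t = y + (LINT s:{0..t}|lborel. h s)" using hx[of t] t e0 by auto
        moreover have "x \<epsilon> = y + (LINT s:{0..\<epsilon>}|lborel. h s)" using hx[of \<epsilon>] t e0 TT by auto
        moreover have "x t = 0" "x \<epsilon> = 0" using xz t e0 TT by auto
        ultimately show "(LINT s:{\<epsilon><..t}|lborel. h s) = 0" by simp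
      qed
    qed
    show "L2_on {0..T} u \<and>
     (\<exists>u0. L2_on {0..\<epsilon>} u0 \<and>
        (LINT \<tau>:{0..\<epsilon>}|lborel. u0 \<tau>) = - xt \<epsilon> \<and>
        (AE t in lborel. t \<in> {0..<T} \<longrightarrow>
           u t = (if t < \<epsilon> then u0 t
                  else if t < 1 then - a1 * x0 (t - 1)
                  else - a1 * (xt (t - 1) + (LINT \<tau>:{0..t-1}|lborel. u0 \<tau>)))))"
    proof (intro conjI exI)
      show "L2_on {0..T} u" by (rule uL2)
      show "L2_on {0..\<epsilon>} u" by (rule L2_subset[OF uL2]) (use TT in auto)
      show "(LINT \<tau>:{0..\<epsilon>}|lborel. u \<tau>) = - xt \<epsilon>"
        using xr[of \<epsilon>] xz[of \<epsilon>] e0 TT by auto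
      show "AE t in lborel. t \<in> {0..<T} \<longrightarrow>
           u t = (if t < \<epsilon> then u t
                  else if t < 1 then - a1 * x0 (t - 1)
                  else - a1 * (xt (t - 1) + (LINT \<tau>:{0..t-1}|lborel. u \<tau>)))"
        using hz AE_lborel_singleton[of \<epsilon>] AE_lborel_singleton[of 1]
      proof eventually_elim
        case (elim s)
        show ?case
        proof (intro impI)
          assume s: "s \<in> {0..<T}"
          show "u s = (if s < \<epsilon> then u s
                  else if s < 1 then - a1 * x0 (s - 1)
                  else - a1 * (xt (s - 1) + (LINT \<tau>:{0..s-1}|lborel. u \<tau>)))"
          proof (cases "s < \<epsilon>")
            case True then show ?thesis by simp
          next
            case False
            then have hs: "h s = 0" using elim s by auto
            show ?thesis
            proof (cases "s < 1")
              case True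
              then show ?thesis using hs False by (simp add: h_def hist_ext_def)
            next
              case False2: False
              then have "x (s - 1) = xt (s - 1) + (LINT s:{0..s - 1}|lborel. u s)"
                using s TT elim by (intro xr) auto
              then show ?thesis using hs False False2 by (simp add: h_def hist_ext_def)
            qed
          qed
        qed
      qed
    qed
  next
    assume R: "L2_on {0..T} u \<and>
     (\<exists>u0. L2_on {0..\<epsilon>} u0 \<and>
        (LINT \<tau>:{0..\<epsilon>}|lborel. u0 \<tau>) = - xt \<epsilon> \<and>
        (AE t in lborel. t \<in> {0..<T} \<longrightarrow>
           u t = (if t < \<epsilon> then u0 t
                  else if t < 1 then - a1 * x0 (t - 1)
                  else - a1 * (xt (t - 1) + (LINT \<tau>:{0..t-1}|lborel. u0 \<tau>)))))"
    then obtain u0 where uL2: "L2_on {0..T} u" and u0L2: "L2_on {0..\<epsilon>} u0"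
      and int0: "(LINT \<tau>:{0..\<epsilon>}|lborel. u0 \<tau>) = - xt \<epsilon>"
      and ae: "AE t in lborel. t \<in> {0..<T} \<longrightarrow>
           u t = (if t < \<epsilon> then u0 t
                  else if t < 1 then - a1 * x0 (t - 1)
                  else - a1 * (xt (t - 1) + (LINT \<tau>:{0..t-1}|lborel. u0 \<tau>)))"
      by blast
    have ui: "set_integrable lborel {0..T} u" using L2_int[OF uL2] by (simp add: emeasure_lborel_Icc_eq)
    have uir: "set_integrable lborel {0..r} u" if "r \<le> T" for r
      by (rule set_integrable_subset[OF ui]) (use that in auto)
    have um: "set_borel_measurable lborel {0..T} u" using uL2 unfolding L2_on_def by simp
    have u0m: "set_borel_measurable lborel {0..\<epsilon>} u0" using u0L2 unfolding L2_on_def by simp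
    have c1: "(LINT s:{0..r}|lborel. u s) = (LINT s:{0..r}|lborel. u0 s)" if r: "r \<in> {0..\<epsilon>}" for r
    proof -
      have m1: "(\<lambda>s. indicator {0..r} s *\<^sub>R u s) \<in> borel_measurable lborel"
        using sbm_subset[OF um, of "{0..r}"] r TT unfolding set_borel_measurable_def by auto
      have m2: "(\<lambda>s. indicator {0..r} s *\<^sub>R u0 s) \<in> borel_measurable lborel"
        using sbm_subset[OF u0m, of "{0..r}"] r unfolding set_borel_measurable_def by auto
      have "AE s in lborel. indicator {0..r} s *\<^sub>R u s = indicator {0..r} s *\<^sub>R u0 s"
        using ae AE_lborel_singleton[of \<epsilon>]
      proof eventually_elim
        case (elim s)
        then show ?case using r TT by (auto simp: indicator_def)
      qed
      then show ?thesis unfolding set_lebesgue_integral_def by (rule integral_cong_AE[OF m1 m2])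
    qed
    define x where "x = (\<lambda>t. if t \<le> \<epsilon> then xt t + (LINT s:{0..t}|lborel. u s) else 0)"
    have c2: "x \<epsilon> = 0" using c1[of \<epsilon>] int0 e0 unfolding x_def by simp
    have xzero: "x t = 0" if "t \<in> {\<epsilon>..T}" for t using c2 that unfolding x_def by auto
    have contA: "continuous_on {0..\<epsilon>} x"
    proof -
      have "continuous_on {0..\<epsilon>} (\<lambda>t. y + a1 * (LINT s:{0..t}|lborel. x0 (s - 1)) + (LINT s:{0..t}|lborel. u s))"
        using cont_int[OF x0i[of \<epsilon>]] cont_int[OF uir[of \<epsilon>]] e1 TT
        by (intro continuous_intros) auto
      then show ?thesis by (rule continuous_on_cong[THEN iffD1, rotated 2]) (auto simp: x_def xt_def)
    qed
    have contB: "continuous_on {\<epsilon>..T} x"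
      by (subst continuous_on_cong[of _ _ x "\<lambda>_. 0"]) (auto simp: xzero)
    have cont: "continuous_on {0..T} x"
    proof -
      have "{0..T} = {0..\<epsilon>} \<union> {\<epsilon>..T}" using e0 TT by auto
      then show ?thesis using continuous_on_closed_Un[OF _ _ contA contB] by simp
    qed
    define h where "h = (\<lambda>s. a1 * hist_ext x0 x (s - 1) + u s)"
    have hpt: "h s = a1 * x0 (s - 1) + u s" if "s \<le> \<epsilon>" for s
      using that e1 by (simp add: h_def hist_ext_def)
    have hA: "set_integrable lborel {0..r} h \<and>
      (LINT s:{0..r}|lborel. h s) = a1 * (LINT s:{0..r}|lborel. x0 (s - 1)) + (LINT s:{0..r}|lborel. u s)"
      if r: "r \<le> \<epsilon>" for r
    proof -
      have i: "set_integrable lborel {0..r} (\<lambda>s. a1 * x0 (s - 1) + u s)"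
        using x0i[of r] uir[of r] r e1 TT by (intro set_integral_add(1)) auto
      have "set_integrable lborel {0..r} h = set_integrable lborel {0..r} (\<lambda>s. a1 * x0 (s - 1) + u s)"
        using r by (intro set_integrable_cong) (auto simp: hpt)
      moreover have "(LINT s:{0..r}|lborel. h s) = (LINT s:{0..r}|lborel. a1 * x0 (s - 1) + u s)"
        using r by (intro set_lebesgue_integral_cong) (auto simp: hpt)
      moreover have "(LINT s:{0..r}|lborel. a1 * x0 (s - 1) + u s) = (LINT s:{0..r}|lborel. a1 * x0 (s - 1)) + (LINT s:{0..r}|lborel. u s)"
        using x0i[of r] uir[of r] r e1 TT by (intro set_integral_add(2)) auto
      ultimately show ?thesis using i by simp
    qed
    have hm: "(\<lambda>s. indicator {\<epsilon><..T} s * h s) \<in> borel_measurable lborel"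
    proof -
      have m1: "(\<lambda>s. indicator {\<epsilon><..T} s * u s) \<in> borel_measurable lborel"
        using sbm_subset[OF um, of "{\<epsilon><..T}"] e0 greaterThanAtMost_subseteq_atLeastAtMost_iff[of \<epsilon> T 0 T] unfolding set_borel_measurable_def by auto
      have m2: "(\<lambda>s. indicator {\<epsilon><..<1} s * x0 (s - 1)) \<in> borel_measurable lborel"
        using sbm_subset[OF L2_shift(2)[OF assms(4)], of "{\<epsilon><..<1}"] e0 greaterThanLessThan_subseteq_atLeastLessThan_iff[of \<epsilon> 1 0 1] unfolding set_borel_measurable_def by auto
      have m3a[measurable]: "(\<lambda>s. indicator {0..\<epsilon>} s *\<^sub>R x s) \<in> borel_measurable borel"
        by (rule borel_measurable_continuous_on_indicator[OF _ contA]) auto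
      have m3b: "(\<lambda>s. (\<lambda>s. indicator {0..\<epsilon>} s *\<^sub>R x s) (s - 1)) \<in> borel_measurable borel"
        by measurable
      have m3: "(\<lambda>s. indicator {1..T} s * (indicator {0..\<epsilon>} (s - 1) *\<^sub>R x (s - 1))) \<in> borel_measurable lborel"
        using m3b by (intro borel_measurable_times borel_measurable_indicator) auto
      have "(\<lambda>s. indicator {\<epsilon><..T} s * u s + a1 * (indicator {\<epsilon><..<1} s * x0 (s - 1)) +
          a1 * (indicator {1..T} s * (indicator {0..\<epsilon>} (s - 1) *\<^sub>R x (s - 1)))) \<in> borel_measurable lborel"
        using m1 m2 m3 by measurable
      moreover have "(\<lambda>s. indicator {\<epsilon><..T} s * u s + a1 * (indicator {\<epsilon><..<1} s * x0 (s - 1)) +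
          a1 * (indicator {1..T} s * (indicator {0..\<epsilon>} (s - 1) *\<^sub>R x (s - 1)))) = (\<lambda>s. indicator {\<epsilon><..T} s * h s)"
        using e0 e1 TT by (auto simp: fun_eq_iff indicator_def h_def hist_ext_def algebra_simps)
      ultimately show ?thesis by simp
    qed
    have hae: "AE s in lborel. indicator {\<epsilon><..T} s * h s = 0"
      using ae AE_lborel_singleton[of 1] AE_lborel_singleton[of T]
    proof eventually_elim
      case (elim s)
      show ?case
      proof (cases "s \<in> {\<epsilon><..T}")
        case False then show ?thesis by simp
      next
        case True
        then have s: "s \<in> {0..<T}" using elim e0 by auto
        have "h s = 0"
        proof (cases "s < 1")
          case True
          then show ?thesis using elim s \<open>s \<in> {\<epsilon><..T}\<close> by (simp add: h_def hist_ext_def)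
        next
          case False
          then have s1: "1 < s" using elim by auto
          then have r: "s - 1 \<in> {0..\<epsilon>}" "s - 1 \<le> \<epsilon>" using s TT by auto
          have "x (s - 1) = xt (s - 1) + (LINT s:{0..s - 1}|lborel. u0 s)"
            using c1[OF r(1)] r(2) unfolding x_def by simp
          then show ?thesis using elim s s1 \<open>s \<in> {\<epsilon><..T}\<close> by (simp add: h_def hist_ext_def)
        qed
        then show ?thesis by simp
      qed
    qed
    have hB: "set_integrable lborel {\<epsilon><..t} h \<and> (LINT s:{\<epsilon><..t}|lborel. h s) = 0" if t: "t \<le> T" for t
    proof
      have "set_integrable lborel {\<epsilon><..T} h"
        unfolding set_integrable_def
        by (rule integrable_cong_AE_imp[where g="\<lambda>_. 0"]) (use hm hae in \<open>auto elim: AE_mp\<close>)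
      then show "set_integrable lborel {\<epsilon><..t} h"
        by (rule set_integrable_subset) (use t in auto)
      have "AE s in lborel. indicator {\<epsilon><..t} s *\<^sub>R h s = 0"
        using hae by eventually_elim (use t in \<open>auto simp: indicator_def split: if_splits\<close>)
      then show "(LINT s:{\<epsilon><..t}|lborel. h s) = 0"
        unfolding set_lebesgue_integral_def by (rule integral_eq_zero_AE)
    qed
    have sol: "is_solution a1 T y x0 u x"
      unfolding is_solution_def
    proof (intro conjI ballI)
      show "continuous_on {0..T} x" by (rule cont)
      fix t assume t: "t \<in> {0..T}"
      have "set_integrable lborel {0..t} h \<and> x t = y + (LINT s:{0..t}|lborel. h s)"
      proof (cases "t \<le> \<epsilon>")
        case True
        then show ?thesis using hA[OF True] unfolding x_def xt_def by simp
      next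
        case False
        have u: "{0..t} = {0..\<epsilon>} \<union> {\<epsilon><..t}" using False e0 by auto
        have i1: "set_integrable lborel {0..\<epsilon>} h" using hA[of \<epsilon>] by simp
        have i2: "set_integrable lborel {\<epsilon><..t} h" using hB[of t] t by simp
        have "set_integrable lborel {0..t} h"
          unfolding u by (rule set_integrable_Un[OF i1 i2]) auto
        moreover have "(LINT s:{0..t}|lborel. h s) = (LINT s:{0..\<epsilon>}|lborel. h s) + (LINT s:{\<epsilon><..t}|lborel. h s)"
          by (subst u, rule set_integral_Un[OF _ i1 i2]) auto
        moreover have "(LINT s:{0..\<epsilon>}|lborel. h s) = xt \<epsilon> - y + (LINT s:{0..\<epsilon>}|lborel. u s)"
          using hA[of \<epsilon>] unfolding xt_def by simp
        moreover have "xt \<epsilon> + (LINT s:{0..\<epsilon>}|lborel. u s) = 0" using c2 unfolding x_def by simp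
        moreover have "x t = 0" using False unfolding x_def by simp
        ultimately show ?thesis using hB[of t] t by simp
      qed
      then show "set_integrable lborel {0..t} (\<lambda>s. a1 * hist_ext x0 x (s - 1) + u s)"
        "x t = y + (LINT s:{0..t}|lborel. a1 * hist_ext x0 x (s - 1) + u s)"
        unfolding h_def by auto
    qed
    show "admissible a1 T y x0 u"
      unfolding admissible_def using uL2 sol xzero TT by auto
  qed
qed

end
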